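(* Let $0\le\theta\le1$, let $K\subset\mathbb{C}^d$ be compact and $\mu$ a Borel probability measure with support in $K$ such that $(K,\mu)$ satisfies the Bernstein–Markov property for $\theta$-incomplete polynomials. Then for every $\epsilon>0$ there exists $C>0$ such that for all $N$ and all $z\in\mathbb{C}^d$, $$\frac{(\Phi_{K,\theta,N}(z))^2}{d(N,\theta)}\le K_{N,\theta}(z,z)\le Ce^{\epsilon N}(\Phi_{K,\theta,N}(z))^2\,d(N,\theta).$$
   Context: $\pi_{N,\theta}$ is the space of polynomials $\sum_{|\alpha|=\lceil N\theta\rceil}^Nc_\alpha z^\alpha$ on $\mathbb{C}^d$, of dimension $d(N,\theta)$. $(K,\mu)$ satisfies the Bernstein–Markov property for $\theta$-incomplete polynomials if for every $\epsilon>0$ there is $C>0$ with $\|P\|_K\le Ce^{\epsilon N}\|P\|_{L^2(\mu)}$ for all $P\in\pi_{N,\theta}$, all $N\ge0$. $\Phi_{K,\theta,N}(z)=\sup\{|f(z)|:f\in\pi_{N,\theta},\ \|f\|_K\le1\}$. If $\{P_j\}_{j=1}^{d(N,\theta)}$ is an orthonormal basis of $\pi_{N,\theta}$ for $\langle f,g\rangle=\int f\bar g\,d\mu$, then $K_{N,\theta}(z,w)=\sum_jP_j(z)\overline{P_j(w)}$. *)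

theory Defs
  imports "HOL-Probability.Probability"
begin

text \<open>Points of C^d are vectors of type complex ^ 'd ('d a finite index type, d = CARD('d)).
  Multi-indices are functions 'd \<Rightarrow> nat; |alpha| = sum over all coordinates.\<close>

definition mdeg :: "('d::finite \<Rightarrow> nat) \<Rightarrow> nat" where
  "mdeg \<alpha> = (\<Sum>i\<in>UNIV. \<alpha> i)"

definition monomial :: "('d::finite \<Rightarrow> nat) \<Rightarrow> complex ^ 'd \<Rightarrow> complex" where
  "monomial \<alpha> z = (\<Prod>i\<in>UNIV. (z $ i) ^ (\<alpha> i))"

definition mindices :: "nat \<Rightarrow> real \<Rightarrow> ('d::finite \<Rightarrow> nat) set" where
  "mindices N \<theta> = {\<alpha>. \<lceil>real N * \<theta>\<rceil> \<le> int (mdeg \<alpha>) \<and> mdeg \<alpha> \<le> N}"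

definition incpoly :: "nat \<Rightarrow> real \<Rightarrow> (complex ^ 'd::finite \<Rightarrow> complex) set" where
  "incpoly N \<theta> = {f. \<exists>c. f = (\<lambda>z. \<Sum>\<alpha>\<in>mindices N \<theta>. c \<alpha> * monomial \<alpha> z)}"

text \<open>d(N,theta) = dim pi_{N,theta} = number of monomials spanning it.\<close>
definition dimNt :: "'d::finite itself \<Rightarrow> nat \<Rightarrow> real \<Rightarrow> nat" where
  "dimNt _ N \<theta> = card (mindices N \<theta> :: ('d \<Rightarrow> nat) set)"

definition supnorm :: "(complex ^ 'd::finite) set \<Rightarrow> (complex ^ 'd \<Rightarrow> complex) \<Rightarrow> real" where
  "supnorm K f = (SUP z\<in>K. cmod (f z))"

definition L2norm :: "(complex ^ 'd::finite) measure \<Rightarrow> (complex ^ 'd \<Rightarrow> complex) \<Rightarrow> real" where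
  "L2norm \<mu> f = sqrt (\<integral>z. (cmod (f z))\<^sup>2 \<partial>\<mu>)"

definition inner_mu :: "(complex ^ 'd::finite) measure \<Rightarrow> (complex ^ 'd \<Rightarrow> complex)
    \<Rightarrow> (complex ^ 'd \<Rightarrow> complex) \<Rightarrow> complex" where
  "inner_mu \<mu> f g = (\<integral>z. f z * cnj (g z) \<partial>\<mu>)"

definition bernstein_markov_incomplete ::
    "(complex ^ 'd::finite) set \<Rightarrow> (complex ^ 'd) measure \<Rightarrow> real \<Rightarrow> bool" where
  "bernstein_markov_incomplete K \<mu> \<theta> \<longleftrightarrow>
     (\<forall>\<epsilon>>0. \<exists>C>0. \<forall>N. \<forall>P\<in>incpoly N \<theta>.
        supnorm K P \<le> C * exp (\<epsilon> * real N) * L2norm \<mu> P)"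

definition PhiKtN :: "(complex ^ 'd::finite) set \<Rightarrow> real \<Rightarrow> nat \<Rightarrow> complex ^ 'd \<Rightarrow> real" where
  "PhiKtN K \<theta> N z = (SUP f\<in>{f\<in>incpoly N \<theta>. supnorm K f \<le> 1}. cmod (f z))"

definition orthonormal_basis_incpoly ::
    "(complex ^ 'd::finite) measure \<Rightarrow> real \<Rightarrow> nat \<Rightarrow> (nat \<Rightarrow> complex ^ 'd \<Rightarrow> complex) \<Rightarrow> bool" where
  "orthonormal_basis_incpoly \<mu> \<theta> N B \<longleftrightarrow>
     (\<forall>j<dimNt TYPE('d) N \<theta>. B j \<in> incpoly N \<theta>) \<and>
     (\<forall>j<dimNt TYPE('d) N \<theta>. \<forall>k<dimNt TYPE('d) N \<theta>.
         inner_mu \<mu> (B j) (B k) = (if j = k then 1 else 0)) \<and>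
     (\<forall>f\<in>incpoly N \<theta>. \<exists>c. f = (\<lambda>z. \<Sum>j<dimNt TYPE('d) N \<theta>. c j * B j z))"

definition kernelNt :: "'d::finite itself \<Rightarrow> real \<Rightarrow> nat \<Rightarrow> (nat \<Rightarrow> complex ^ 'd \<Rightarrow> complex)
    \<Rightarrow> complex ^ 'd \<Rightarrow> complex ^ 'd \<Rightarrow> complex" where
  "kernelNt _ \<theta> N B z w = (\<Sum>j<dimNt TYPE('d) N \<theta>. B j z * cnj (B j w))"

end

theory Submission
  imports Defs
begin

lemma poly_cont: "f \<in> incpoly N \<theta> \<Longrightarrow> continuous_on UNIV (f :: complex ^ 'd::finite \<Rightarrow> complex)"
  unfolding incpoly_def monomial_def
  by (auto intro!: continuous_intros)

lemma poly_meas: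
  assumes "f \<in> incpoly N \<theta>" "sets \<mu> = sets borel"
  shows "(f :: complex ^ 'd::finite \<Rightarrow> complex) \<in> borel_measurable \<mu>"
proof -
  have "f \<in> borel_measurable borel"
    using poly_cont[OF assms(1)] by (rule borel_measurable_continuous_onI)
  then show ?thesis by (simp add: measurable_cong_sets[OF assms(2) refl])
qed

lemma poly_le_sup:
  assumes "f \<in> incpoly N \<theta>" "compact K" "z \<in> K"
  shows "cmod ((f :: complex ^ 'd::finite \<Rightarrow> complex) z) \<le> supnorm K f"
proof -
  have "compact ((\<lambda>z. cmod (f z)) ` K)"
    by (rule compact_continuous_image) (auto intro!: continuous_intros continuous_on_subset[OF poly_cont[OF assms(1)]] assms(2))
  then have "bdd_above ((\<lambda>z. cmod (f z)) ` K)"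
    by (simp add: bounded_imp_bdd_above compact_imp_bounded)
  then show ?thesis unfolding supnorm_def using assms(3) by (rule cSUP_upper2) simp
qed

lemma poly_scale:
  assumes "f \<in> incpoly N \<theta>"
  shows "(\<lambda>z. a * f z) \<in> incpoly N \<theta>"
proof -
  obtain c where c: "f = (\<lambda>z. \<Sum>\<alpha>\<in>mindices N \<theta>. c \<alpha> * monomial \<alpha> z)"
    using assms unfolding incpoly_def by auto
  show ?thesis unfolding incpoly_def
    by (rule CollectI, rule exI[of _ "\<lambda>\<alpha>. a * c \<alpha>"]) (simp add: c sum_distrib_left mult.assoc)
qed

lemma AE_K:
  assumes "sets \<mu> = sets borel" "compact K" "emeasure \<mu> (UNIV - K) = 0"
  shows "AE z in (\<mu> :: (complex ^ 'd::finite) measure). z \<in> K"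
proof -
  have sp: "space \<mu> = UNIV" using sets_eq_imp_space_eq[OF assms(1)] by simp
  have "open (UNIV - K)" using compact_imp_closed[OF assms(2)] by (simp add: closed_def Compl_eq_Diff_UNIV)
  then have "UNIV - K \<in> sets \<mu>" using assms(1) by simp
  then have "UNIV - K \<in> null_sets \<mu>" using assms(3) by (simp add: null_sets_def)
  then show ?thesis by (rule AE_I') (auto simp: sp)
qed

lemma K_ne:
  assumes "prob_space \<mu>" "sets \<mu> = sets borel" "emeasure \<mu> (UNIV - K) = 0"
  shows "(K :: (complex ^ 'd::finite) set) \<noteq> {}"
proof
  assume "K = {}"
  have sp: "space \<mu> = UNIV" using sets_eq_imp_space_eq[OF assms(2)] by simp
  have "emeasure \<mu> (space \<mu>) = 1" using assms(1) by (simp add: prob_space.emeasure_space_1)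
  then show False using assms(3) \<open>K = {}\<close> sp by simp
qed

lemma integ:
  assumes "prob_space \<mu>" "sets \<mu> = sets borel" "compact K" "emeasure \<mu> (UNIV - K) = 0"
    and "f \<in> incpoly N \<theta>" "g \<in> incpoly M \<theta>'"
  shows "integrable (\<mu> :: (complex ^ 'd::finite) measure) (\<lambda>z. f z * cnj (g z))"
proof (rule Bochner_Integration.integrable_bound[where f="\<lambda>_. complex_of_real (supnorm K f * supnorm K g)"])
  interpret prob_space \<mu> by fact
  show "integrable \<mu> (\<lambda>_. complex_of_real (supnorm K f * supnorm K g))" by simp
  show "(\<lambda>z. f z * cnj (g z)) \<in> borel_measurable \<mu>"
  proof -
    have "continuous_on UNIV (\<lambda>z. f z * cnj (g z))"
      using poly_cont[OF assms(5)] poly_cont[OF assms(6)] by (intro continuous_intros)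
    then have "(\<lambda>z. f z * cnj (g z)) \<in> borel_measurable borel"
      by (rule borel_measurable_continuous_onI)
    then show ?thesis by (simp add: measurable_cong_sets[OF assms(2) refl])
  qed
  show "AE x in \<mu>. norm (f x * cnj (g x)) \<le> norm (complex_of_real (supnorm K f * supnorm K g))"
    using AE_K[OF assms(2,3,4)]
  proof eventually_elim
    case (elim z)
    have a: "cmod (f z) \<le> supnorm K f" "cmod (g z) \<le> supnorm K g"
      using poly_le_sup[OF assms(5,3) elim] poly_le_sup[OF assms(6,3) elim] by auto
    have "norm (f z * cnj (g z)) = cmod (f z) * cmod (g z)" by (simp add: norm_mult)
    also have "\<dots> \<le> supnorm K f * supnorm K g" using a by (intro mult_mono) (auto intro: order_trans[OF norm_ge_zero])
    also have "\<dots> \<le> norm (complex_of_real (supnorm K f * supnorm K g))"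
      by (simp only: norm_of_real abs_ge_self)
    finally show ?case .
  qed
qed

lemma inner_self:
  "inner_mu \<mu> f f = complex_of_real (\<integral>z. (cmod (f z))\<^sup>2 \<partial>\<mu>)"
proof -
  have "(\<lambda>z. f z * cnj (f z)) = (\<lambda>z. complex_of_real ((cmod (f z))\<^sup>2))"
    by (rule ext) (simp only: complex_norm_square[symmetric])
  then show ?thesis unfolding inner_mu_def by (simp only: integral_complex_of_real)
qed

lemma L2_le_sup:
  assumes "prob_space \<mu>" "sets \<mu> = sets borel" "compact K" "emeasure \<mu> (UNIV - K) = 0"
    and "f \<in> incpoly N \<theta>"
  shows "(\<integral>z. (cmod (f z))\<^sup>2 \<partial>(\<mu> :: (complex ^ 'd::finite) measure)) \<le> (supnorm K f)\<^sup>2"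
proof (cases "integrable \<mu> (\<lambda>z. (cmod (f z))\<^sup>2)")
  case True
  interpret prob_space \<mu> by fact
  have "(\<integral>z. (cmod (f z))\<^sup>2 \<partial>\<mu>) \<le> (\<integral>z. (supnorm K f)\<^sup>2 \<partial>\<mu>)"
  proof (rule integral_mono_AE[OF True])
    show "integrable \<mu> (\<lambda>z. (supnorm K f)\<^sup>2)" by simp
    show "AE z in \<mu>. (cmod (f z))\<^sup>2 \<le> (supnorm K f)\<^sup>2"
      using AE_K[OF assms(2,3,4)] by eventually_elim (intro power_mono poly_le_sup[OF assms(5,3)], auto)
  qed
  also have "\<dots> = (supnorm K f)\<^sup>2" by (simp add: prob_space)
  finally show ?thesis .
next
  case False
  then show ?thesis by (simp add: not_integrable_integral_eq)
qed

lemma expand: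
  assumes int: "\<And>j k. j < d \<Longrightarrow> k < d \<Longrightarrow> integrable \<mu> (\<lambda>z. B j z * cnj (B k z))"
  shows "inner_mu \<mu> (\<lambda>z. \<Sum>j<d. c j * B j z) (\<lambda>z. \<Sum>j<d. c j * B j z)
         = (\<Sum>j<d. \<Sum>k<d. c j * cnj (c k) * inner_mu \<mu> (B j) (B k))"
proof -
  have eq: "(\<lambda>z. (\<Sum>j<d. c j * B j z) * cnj (\<Sum>j<d. c j * B j z))
      = (\<lambda>z. \<Sum>j<d. \<Sum>k<d. c j * cnj (c k) * (B j z * cnj (B k z)))"
    by (rule ext) (simp add: sum_product mult_ac)
  have "(\<integral>z. (\<Sum>j<d. \<Sum>k<d. c j * cnj (c k) * (B j z * cnj (B k z))) \<partial>\<mu>)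
      = (\<Sum>j<d. \<integral>z. (\<Sum>k<d. c j * cnj (c k) * (B j z * cnj (B k z))) \<partial>\<mu>)"
    by (rule Bochner_Integration.integral_sum[where I="{..<d}" and f="\<lambda>j z. \<Sum>k<d. c j * cnj (c k) * (B j z * cnj (B k z))"]) (auto intro!: integrable_sum int)
  also have "\<dots> = (\<Sum>j<d. \<Sum>k<d. \<integral>z. c j * cnj (c k) * (B j z * cnj (B k z)) \<partial>\<mu>)"
    by (rule sum.cong[OF refl], rule Bochner_Integration.integral_sum[where I="{..<d}"]) (auto intro!: int)
  also have "\<dots> = (\<Sum>j<d. \<Sum>k<d. c j * cnj (c k) * inner_mu \<mu> (B j) (B k))"
    unfolding inner_mu_def by simp
  finally show ?thesis unfolding inner_mu_def eq .
qed

lemma sum_delta_ortho: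
  assumes "\<And>j k. j < d \<Longrightarrow> k < d \<Longrightarrow> I j k = (if j = k then 1 else 0)"
  shows "Re (\<Sum>j<d. \<Sum>k<d. c j * cnj (c k) * I j k) = (\<Sum>j<(d::nat). (cmod (c j))\<^sup>2)"
proof -
  have "(\<Sum>j<d. \<Sum>k<d. c j * cnj (c k) * I j k) = (\<Sum>j<d. c j * cnj (c j))"
  proof (rule sum.cong[OF refl])
    fix j assume "j \<in> {..<d}"
    then have "(\<Sum>k<d. c j * cnj (c k) * I j k) = (\<Sum>k<d. if j = k then c j * cnj (c k) else 0)"
      using assms by (intro sum.cong) auto
    also have "\<dots> = c j * cnj (c j)" using \<open>j \<in> {..<d}\<close> by (simp add: sum.delta)
    finally show "(\<Sum>k<d. c j * cnj (c k) * I j k) = c j * cnj (c j)" .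
  qed
  also have "\<dots> = (\<Sum>j<d. complex_of_real ((cmod (c j))\<^sup>2))"
    by (simp only: complex_norm_square)
  finally show ?thesis by simp
qed

theorem mainTheorem13:
  fixes K :: "(complex ^ 'd::finite) set"
    and \<mu> :: "(complex ^ 'd) measure"
    and \<theta> :: real
    and B :: "nat \<Rightarrow> nat \<Rightarrow> complex ^ 'd \<Rightarrow> complex"
  assumes "0 \<le> \<theta>" and "\<theta> \<le> 1"
    and "compact K"
    and "prob_space \<mu>" and "sets \<mu> = sets borel"
    and "emeasure \<mu> (UNIV - K) = 0"
    and "bernstein_markov_incomplete K \<mu> \<theta>"
    and "\<And>N. orthonormal_basis_incpoly \<mu> \<theta> N (B N)"
  shows "\<forall>\<epsilon>>0. \<exists>C>0. \<forall>N. \<forall>z :: complex ^ 'd.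
           (PhiKtN K \<theta> N z)\<^sup>2 / real (dimNt TYPE('d) N \<theta>) \<le> Re (kernelNt TYPE('d) \<theta> N (B N) z z)
         \<and> Re (kernelNt TYPE('d) \<theta> N (B N) z z)
             \<le> C * exp (\<epsilon> * real N) * (PhiKtN K \<theta> N z)\<^sup>2 * real (dimNt TYPE('d) N \<theta>)"
proof (intro allI impI)
  fix \<epsilon> :: real assume "\<epsilon> > 0"
  then have "\<epsilon> / 2 > 0" by simp
  then obtain C where C: "C > 0" and BM: "\<And>N P. P \<in> incpoly N \<theta> \<Longrightarrow>
      supnorm K P \<le> C * exp (\<epsilon> / 2 * real N) * L2norm \<mu> P"
    using assms(7) unfolding bernstein_markov_incomplete_def by blast
  have Kne: "K \<noteq> {}" using K_ne[OF assms(4,5,6)] .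
  show "\<exists>C>0. \<forall>N. \<forall>z :: complex ^ 'd.
           (PhiKtN K \<theta> N z)\<^sup>2 / real (dimNt TYPE('d) N \<theta>) \<le> Re (kernelNt TYPE('d) \<theta> N (B N) z z)
         \<and> Re (kernelNt TYPE('d) \<theta> N (B N) z z)
             \<le> C * exp (\<epsilon> * real N) * (PhiKtN K \<theta> N z)\<^sup>2 * real (dimNt TYPE('d) N \<theta>)"
  proof (intro exI[of _ "C\<^sup>2"] conjI allI)
    show "C\<^sup>2 > 0" using C by simp
    fix N :: nat and z :: "complex ^ 'd"
    define d where "d = dimNt TYPE('d) N \<theta>"
    define Kz where "Kz = (\<Sum>j<d. (cmod (B N j z))\<^sup>2)"
    have ob: "orthonormal_basis_incpoly \<mu> \<theta> N (B N)" by fact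
    have Bin: "\<And>j. j < d \<Longrightarrow> B N j \<in> incpoly N \<theta>"
      using ob unfolding orthonormal_basis_incpoly_def d_def by blast
    have Bon: "\<And>j k. j < d \<Longrightarrow> k < d \<Longrightarrow> inner_mu \<mu> (B N j) (B N k) = (if j = k then 1 else 0)"
      using ob unfolding orthonormal_basis_incpoly_def d_def by blast
    have Bsp: "\<And>f. f \<in> incpoly N \<theta> \<Longrightarrow> \<exists>c. f = (\<lambda>z. \<Sum>j<d. c j * B N j z)"
      using ob unfolding orthonormal_basis_incpoly_def d_def by blast
    have ReK: "Re (kernelNt TYPE('d) \<theta> N (B N) z z) = Kz"
      unfolding kernelNt_def Kz_def d_def[symmetric] Re_sum
      by (rule sum.cong[OF refl]) (metis Re_complex_of_real complex_norm_square)
    have Kz0: "Kz \<ge> 0" unfolding Kz_def by (simp add: sum_nonneg)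
    have bound: "cmod (f z) \<le> sqrt Kz" if f: "f \<in> incpoly N \<theta>" "supnorm K f \<le> 1" for f
    proof -
      obtain c where c: "f = (\<lambda>z. \<Sum>j<d. c j * B N j z)" using Bsp[OF f(1)] by blast
      have "inner_mu \<mu> f f = (\<Sum>j<d. \<Sum>k<d. c j * cnj (c k) * inner_mu \<mu> (B N j) (B N k))"
        unfolding c by (rule expand) (auto intro!: integ[OF assms(4,5,3,6)] Bin)
      then have "Re (inner_mu \<mu> f f) = (\<Sum>j<d. (cmod (c j))\<^sup>2)"
        using sum_delta_ortho[of d "\<lambda>j k. inner_mu \<mu> (B N j) (B N k)" c] Bon by simp
      moreover have "Re (inner_mu \<mu> f f) \<le> (supnorm K f)\<^sup>2"
        using L2_le_sup[OF assms(4,5,3,6) f(1)] by (simp add: inner_self)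
      moreover have "0 \<le> supnorm K f"
      proof -
        obtain w where "w \<in> K" using Kne by blast
        then show ?thesis using poly_le_sup[OF f(1) assms(3)] by (meson norm_ge_zero order_trans)
      qed
      ultimately have cs: "(\<Sum>j<d. (cmod (c j))\<^sup>2) \<le> 1"
        using f(2) by (smt (verit) power_le_one)
      have "cmod (f z) \<le> (\<Sum>j<d. cmod (c j) * cmod (B N j z))"
        unfolding c by (rule order_trans[OF norm_sum]) (simp add: norm_mult)
      then have "(cmod (f z))\<^sup>2 \<le> (\<Sum>j<d. cmod (c j) * cmod (B N j z))\<^sup>2"
        by (simp add: power_mono)
      also have "\<dots> \<le> (\<Sum>j<d. (cmod (c j))\<^sup>2) * Kz"
        unfolding Kz_def by (rule Cauchy_Schwarz_ineq_sum)
      also have "\<dots> \<le> Kz" using mult_right_mono[OF cs Kz0] by simp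
      finally show ?thesis by (simp add: real_le_rsqrt)
    qed
    define S where "S = {f \<in> incpoly N \<theta>. supnorm K f \<le> 1}"
    have PhiS: "PhiKtN K \<theta> N z = (SUP f\<in>S. cmod (f z))" unfolding PhiKtN_def S_def ..
    have zero_in: "(\<lambda>_. 0) \<in> S"
    proof -
      have "(\<lambda>_. 0) \<in> incpoly N \<theta>" unfolding incpoly_def by (auto intro!: exI[of _ "\<lambda>_. 0"])
      moreover have "supnorm K (\<lambda>_. 0) = 0" unfolding supnorm_def using Kne by simp
      ultimately show ?thesis unfolding S_def by simp
    qed
    have bdd: "bdd_above ((\<lambda>f. cmod (f z)) ` S)"
      using bound unfolding S_def by (auto intro!: bdd_aboveI[of _ "sqrt Kz"])
    have Phi_le: "PhiKtN K \<theta> N z \<le> sqrt Kz"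
      unfolding PhiS using zero_in bound by (intro cSUP_least) (auto simp: S_def)
    have Phi0: "0 \<le> PhiKtN K \<theta> N z"
      unfolding PhiS using cSUP_upper[OF zero_in bdd] by simp
    have Phi_sq: "(PhiKtN K \<theta> N z)\<^sup>2 \<le> Kz"
      using Phi_le Phi0 Kz0 by (metis real_sqrt_le_iff real_sqrt_pow2 power_mono)
    show "(PhiKtN K \<theta> N z)\<^sup>2 / real (dimNt TYPE('d) N \<theta>) \<le> Re (kernelNt TYPE('d) \<theta> N (B N) z z)"
      unfolding ReK d_def[symmetric]
    proof (cases "d = 0")
      case True then show "(PhiKtN K \<theta> N z)\<^sup>2 / real d \<le> Kz" using Kz0 by simp
    next
      case False
      then have "(PhiKtN K \<theta> N z)\<^sup>2 / real d \<le> (PhiKtN K \<theta> N z)\<^sup>2"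
        by (simp add: divide_le_eq mult_le_cancel_left1)
      then show "(PhiKtN K \<theta> N z)\<^sup>2 / real d \<le> Kz" using Phi_sq by linarith
    qed
    have each: "(cmod (B N j z))\<^sup>2 \<le> C\<^sup>2 * exp (\<epsilon> * real N) * (PhiKtN K \<theta> N z)\<^sup>2" if j: "j < d" for j
    proof -
      define s where "s = supnorm K (B N j)"
      have L2: "L2norm \<mu> (B N j) = 1"
      proof -
        have "complex_of_real (\<integral>w. (cmod (B N j w))\<^sup>2 \<partial>\<mu>) = 1"
          using Bon[OF j j] by (simp add: inner_self)
        then show ?thesis unfolding L2norm_def by (metis of_real_eq_1_iff real_sqrt_one)
      qed
      have s_le: "s \<le> C * exp (\<epsilon> / 2 * real N)" using BM[OF Bin[OF j]] L2 s_def by simp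
      have s0: "0 \<le> s"
      proof -
        obtain w where "w \<in> K" using Kne by blast
        then show ?thesis unfolding s_def using poly_le_sup[OF Bin[OF j] assms(3)] by (meson norm_ge_zero order_trans)
      qed
      have "1 \<le> s\<^sup>2"
      proof -
        have "complex_of_real (\<integral>w. (cmod (B N j w))\<^sup>2 \<partial>\<mu>) = 1"
          using Bon[OF j j] by (simp add: inner_self)
        then have "(\<integral>w. (cmod (B N j w))\<^sup>2 \<partial>\<mu>) = 1" by (metis of_real_eq_1_iff)
        then show ?thesis using L2_le_sup[OF assms(4,5,3,6) Bin[OF j]] s_def by simp
      qed
      then have spos: "s > 0" using s0 by (cases "s = 0") auto
      define g where "g = (\<lambda>w. complex_of_real (1 / s) * B N j w)"
      have gin: "g \<in> incpoly N \<theta>" unfolding g_def by (rule poly_scale[OF Bin[OF j]])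
      have "supnorm K g \<le> 1" unfolding supnorm_def
      proof (rule cSUP_least[OF Kne])
        fix w assume "w \<in> K"
        then have "cmod (B N j w) \<le> s" unfolding s_def by (rule poly_le_sup[OF Bin[OF j] assms(3)])
        then show "cmod (g w) \<le> 1" unfolding g_def using spos by (simp add: norm_mult norm_divide divide_le_eq)
      qed
      then have "g \<in> S" using gin S_def by simp
      then have "cmod (g z) \<le> PhiKtN K \<theta> N z" unfolding PhiS by (rule cSUP_upper[OF _ bdd])
      then have "cmod (B N j z) \<le> s * PhiKtN K \<theta> N z"
        unfolding g_def using spos by (simp add: norm_mult norm_divide divide_le_eq mult.commute)
      also have "\<dots> \<le> C * exp (\<epsilon> / 2 * real N) * PhiKtN K \<theta> N z"
        using s_le Phi0 by (rule mult_right_mono)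
      finally have "(cmod (B N j z))\<^sup>2 \<le> (C * exp (\<epsilon> / 2 * real N) * PhiKtN K \<theta> N z)\<^sup>2"
        by (simp add: power_mono)
      also have "\<dots> = C\<^sup>2 * exp (\<epsilon> * real N) * (PhiKtN K \<theta> N z)\<^sup>2"
      proof -
        have "(exp (\<epsilon> / 2 * real N))\<^sup>2 = exp (\<epsilon> * real N)"
          by (simp add: power2_eq_square exp_add[symmetric])
        then show ?thesis by (simp add: power_mult_distrib)
      qed
      finally show ?thesis .
    qed
    have "Kz \<le> (\<Sum>j<d. C\<^sup>2 * exp (\<epsilon> * real N) * (PhiKtN K \<theta> N z)\<^sup>2)"
      unfolding Kz_def by (rule sum_mono) (simp add: each)
    also have "\<dots> = C\<^sup>2 * exp (\<epsilon> * real N) * (PhiKtN K \<theta> N z)\<^sup>2 * real d" by simp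
    finally show "Re (kernelNt TYPE('d) \<theta> N (B N) z z)
             \<le> C\<^sup>2 * exp (\<epsilon> * real N) * (PhiKtN K \<theta> N z)\<^sup>2 * real (dimNt TYPE('d) N \<theta>)"
      unfolding ReK d_def .
  qed
qed

end
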